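(* Let $K$ be a simplicial complex on $[m]$. The quotient map $\varrho\colon\Lambda[u_1,\ldots,u_m]\otimes\mathbb Z[K]\to R^*(K)$ induces an isomorphism in cohomology.
   Context: $\mathbb Z[K]=\mathbb Z[v_1,\dots,v_m]/\mathcal I_K$, with $\mathcal I_K$ generated by monomials $v_{i_1}\cdots v_{i_k}$, $\{i_1,\dots,i_k\}\notin K$. The Koszul algebra $\Lambda[u_1,\ldots,u_m]\otimes\mathbb Z[K]$ is the differential bigraded algebra with $\operatorname{bideg}u_i=(-1,2)$, $\operatorname{bideg}v_i=(0,2)$, $du_i=v_i$, $dv_i=0$, $d$ a derivation. $R^*(K)$ is the quotient differential bigraded algebra $\Lambda[u_1,\ldots,u_m]\otimes\mathbb Z[K]/(v_i^2=u_iv_i=0,\ i=1,\dots,m)$ (the ideal generated by the $v_i^2$ and $u_iv_i$ is $d$-stable), with the induced differential and bigrading. *)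

theory Defs
  imports Main
begin

text \<open>A simplicial complex on [m] = {1..m}: a nonempty family of subsets of [m]
  closed under taking subsets (ghost vertices allowed).\<close>
definition simplicial_complex_on :: "nat \<Rightarrow> nat set set \<Rightarrow> bool" where
  "simplicial_complex_on m K \<longleftrightarrow>
     K \<noteq> {} \<and> (\<forall>\<sigma>\<in>K. \<sigma> \<subseteq> {1..m}) \<and> (\<forall>\<sigma>\<in>K. \<forall>\<tau>. \<tau> \<subseteq> \<sigma> \<longrightarrow> \<tau> \<in> K)"

text \<open>Elements of a free abelian group on a basis set are integer-valued functions on the
  basis with finite support contained in the basis set.\<close>
definition free_on :: "'b set \<Rightarrow> ('b \<Rightarrow> int) set" where
  "free_on B = {c. finite {b. c b \<noteq> 0} \<and> {b. c b \<noteq> 0} \<subseteq> B}"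

definition lin_ext :: "('b \<Rightarrow> ('b \<Rightarrow> int)) \<Rightarrow> ('b \<Rightarrow> int) \<Rightarrow> ('b \<Rightarrow> int)" where
  "lin_ext f c = (\<lambda>b'. \<Sum>b\<in>{b. c b \<noteq> 0}. c b * f b b')"

text \<open>Cohomology H(C,d) = ker d / im d, as the set of cosets z + im d of cycles z.\<close>
definition coset_of :: "('b \<Rightarrow> int) \<Rightarrow> ('b \<Rightarrow> int) set \<Rightarrow> ('b \<Rightarrow> int) set" where
  "coset_of z S = (\<lambda>s. (\<lambda>b. z b + s b)) ` S"

definition cohomology ::
  "('b \<Rightarrow> int) set \<Rightarrow> (('b \<Rightarrow> int) \<Rightarrow> ('b \<Rightarrow> int)) \<Rightarrow> ('b \<Rightarrow> int) set set" where
  "cohomology C d = (\<lambda>z. coset_of z (d ` C)) ` {z \<in> C. d z = (\<lambda>_. 0)}"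

definition induced_map ::
  "('b \<Rightarrow> int) set \<Rightarrow> (('b \<Rightarrow> int) \<Rightarrow> ('b \<Rightarrow> int)) \<Rightarrow> (('b \<Rightarrow> int) \<Rightarrow> ('b \<Rightarrow> int))
   \<Rightarrow> ('b \<Rightarrow> int) set \<Rightarrow> ('b \<Rightarrow> int) set" where
  "induced_map C' d' f cl = coset_of (f (SOME z. z \<in> cl)) (d' ` C')"

text \<open>f is a cochain map from (C,d) to (C',d') and the induced map H(C) \<rightarrow> H(C') is
  bijective (it is additive, so this is an isomorphism of groups).\<close>
definition induces_iso_in_cohomology ::
  "('b \<Rightarrow> int) set \<Rightarrow> (('b \<Rightarrow> int) \<Rightarrow> ('b \<Rightarrow> int)) \<Rightarrow>
   ('b \<Rightarrow> int) set \<Rightarrow> (('b \<Rightarrow> int) \<Rightarrow> ('b \<Rightarrow> int)) \<Rightarrow> (('b \<Rightarrow> int) \<Rightarrow> ('b \<Rightarrow> int)) \<Rightarrow> bool" where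
  "induces_iso_in_cohomology C d C' d' f \<longleftrightarrow>
     (\<forall>c\<in>C. f c \<in> C') \<and> (\<forall>c\<in>C. f (d c) = d' (f c)) \<and>
     bij_betw (induced_map C' d' f) (cohomology C d) (cohomology C' d')"

text \<open>Basis monomials u_J v^\<alpha> (J \<subseteq> [m], exterior part; \<alpha> exponents of the v_i).
  Z[K] is free abelian on the monomials v^\<alpha> not in the monomial ideal I_K, i.e. those
  whose support is a face of K.\<close>
type_synonym kmonomial = "nat set \<times> (nat \<Rightarrow> nat)"

definition supp_exp :: "(nat \<Rightarrow> nat) \<Rightarrow> nat set" where
  "supp_exp \<alpha> = {i. \<alpha> i \<noteq> 0}"

definition koszul_basis :: "nat \<Rightarrow> nat set set \<Rightarrow> kmonomial set" where
  "koszul_basis m K = {(J, \<alpha>). J \<subseteq> {1..m} \<and> supp_exp \<alpha> \<in> K}"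

text \<open>Sign of removing u_j from u_J = u_j1 ... u_jk in increasing order.\<close>
definition koszul_sign :: "nat \<Rightarrow> nat set \<Rightarrow> int" where
  "koszul_sign j J = (-1) ^ card {i \<in> J. i < j}"

text \<open>d(u_J v^a) = sum over j in J of (sign) u_(J-j) v^(a+e_j); terms outside Z[K] are zero.\<close>
definition koszul_d_basis :: "nat \<Rightarrow> nat set set \<Rightarrow> kmonomial \<Rightarrow> kmonomial \<Rightarrow> int" where
  "koszul_d_basis m K b b' =
     (case b of (J, \<alpha>) \<Rightarrow>
       (if b' \<in> koszul_basis m K then
          (\<Sum>j\<in>J. if b' = (J - {j}, \<alpha>(j := Suc (\<alpha> j))) then koszul_sign j J else 0)
        else 0))"

definition koszul_complex :: "nat \<Rightarrow> nat set set \<Rightarrow> (kmonomial \<Rightarrow> int) set" where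
  "koszul_complex m K = free_on (koszul_basis m K)"

definition koszul_d :: "nat \<Rightarrow> nat set set \<Rightarrow> (kmonomial \<Rightarrow> int) \<Rightarrow> (kmonomial \<Rightarrow> int)" where
  "koszul_d m K = lin_ext (koszul_d_basis m K)"

text \<open>The ideal generated by v_i^2 and u_i v_i is the span of the basis monomials divisible by
  some v_i^2 or some u_i v_i; the quotient is free on the remaining basis monomials
  u_J v_I with I \<in> K square-free and I \<inter> J = {}.\<close>
definition in_R_ideal :: "kmonomial \<Rightarrow> bool" where
  "in_R_ideal b = (case b of (J, \<alpha>) \<Rightarrow> (\<exists>i. 2 \<le> \<alpha> i) \<or> (\<exists>i\<in>J. 1 \<le> \<alpha> i))"

definition R_basis :: "nat \<Rightarrow> nat set set \<Rightarrow> kmonomial set" where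
  "R_basis m K = {b \<in> koszul_basis m K. \<not> in_R_ideal b}"

definition R_complex :: "nat \<Rightarrow> nat set set \<Rightarrow> (kmonomial \<Rightarrow> int) set" where
  "R_complex m K = free_on (R_basis m K)"

text \<open>The quotient map \<rho> (identifying R^*(K) with the span of R_basis).\<close>
definition rho :: "nat \<Rightarrow> nat set set \<Rightarrow> (kmonomial \<Rightarrow> int) \<Rightarrow> (kmonomial \<Rightarrow> int)" where
  "rho m K c = (\<lambda>b. if b \<in> R_basis m K then c b else 0)"

definition R_d :: "nat \<Rightarrow> nat set set \<Rightarrow> (kmonomial \<Rightarrow> int) \<Rightarrow> (kmonomial \<Rightarrow> int)" where
  "R_d m K c = rho m K (koszul_d m K c)"

end

theory Submission
  imports Defs
begin

definition spt :: "('b \<Rightarrow> int) \<Rightarrow> 'b set" where "spt c = {b. c b \<noteq> 0}"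
definition dlt :: "'b \<Rightarrow> 'b \<Rightarrow> int" where "dlt y x = (if x = y then 1 else 0)"

lemma lin_ext_sum:
  assumes "finite S" "spt c \<subseteq> S"
  shows "lin_ext f c z = (\<Sum>b\<in>S. c b * f b z)"
proof -
  have "lin_ext f c z = (\<Sum>b\<in>spt c. c b * f b z)" by (simp add: lin_ext_def spt_def)
  also have "\<dots> = (\<Sum>b\<in>S. c b * f b z)"
    by (rule sum.mono_neutral_left) (use assms in \<open>auto simp: spt_def\<close>)
  finally show ?thesis .
qed

lemma lin_ext_dlt: "lin_ext f (\<lambda>x. a * dlt y x) = (\<lambda>z. a * f y z)"
  by (rule ext, subst lin_ext_sum[where S="{y}"]) (auto simp: spt_def dlt_def)

lemma lin_ext_zero: "lin_ext f (\<lambda>x. 0) = (\<lambda>z. 0)"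
  by (simp add: lin_ext_def)

lemma lin_ext_comb:
  assumes "finite S" "\<forall>b\<in>S. finite (spt (g b))"
  shows "lin_ext f (\<lambda>x. \<Sum>b\<in>S. g b x) = (\<lambda>z. \<Sum>b\<in>S. lin_ext f (g b) z)"
proof
  fix z
  define T where "T = (\<Union>b\<in>S. spt (g b))"
  have fT: "finite T" using assms by (simp add: T_def)
  have "spt (\<lambda>x. \<Sum>b\<in>S. g b x) \<subseteq> T"
  proof
    fix x assume "x \<in> spt (\<lambda>x. \<Sum>b\<in>S. g b x)"
    then have "(\<Sum>b\<in>S. g b x) \<noteq> 0" by (simp add: spt_def)
    then obtain b where "b \<in> S" "g b x \<noteq> 0" using sum.not_neutral_contains_not_neutral by blast
    then show "x \<in> T" by (auto simp: T_def spt_def)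
  qed
  then have "lin_ext f (\<lambda>x. \<Sum>b\<in>S. g b x) z = (\<Sum>x\<in>T. (\<Sum>b\<in>S. g b x) * f x z)"
    by (rule lin_ext_sum[OF fT])
  also have "\<dots> = (\<Sum>b\<in>S. \<Sum>x\<in>T. g b x * f x z)"
    unfolding sum_distrib_right by (rule sum.swap)
  also have "\<dots> = (\<Sum>b\<in>S. lin_ext f (g b) z)"
    by (rule sum.cong[OF refl], rule lin_ext_sum[symmetric]) (use fT in \<open>auto simp: T_def\<close>)
  finally show "lin_ext f (\<lambda>x. \<Sum>b\<in>S. g b x) z = (\<Sum>b\<in>S. lin_ext f (g b) z)" .
qed

lemma lin_ext_smult:
  assumes "finite (spt g)"
  shows "lin_ext f (\<lambda>x. a * g x) z = a * lin_ext f g z"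
proof -
  have "lin_ext f (\<lambda>x. a * g x) z = (\<Sum>b\<in>spt g. (a * g b) * f b z)"
    by (rule lin_ext_sum) (use assms in \<open>auto simp: spt_def\<close>)
  also have "\<dots> = a * (\<Sum>b\<in>spt g. g b * f b z)" by (simp add: sum_distrib_left mult.assoc)
  also have "\<dots> = a * lin_ext f g z" by (subst lin_ext_sum[of "spt g"]) (use assms in auto)
  finally show ?thesis .
qed

lemma lin_ext_diff:
  assumes "finite (spt c1)" "finite (spt c2)"
  shows "lin_ext f (\<lambda>x. c1 x - c2 x) = (\<lambda>z. lin_ext f c1 z - lin_ext f c2 z)"
proof
  fix z
  let ?S = "spt c1 \<union> spt c2"
  have "lin_ext f (\<lambda>x. c1 x - c2 x) z = (\<Sum>b\<in>?S. (c1 b - c2 b) * f b z)"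
    by (rule lin_ext_sum) (use assms in \<open>auto simp: spt_def\<close>)
  also have "\<dots> = (\<Sum>b\<in>?S. c1 b * f b z) - (\<Sum>b\<in>?S. c2 b * f b z)"
    by (simp add: left_diff_distrib sum_subtractf)
  also have "\<dots> = lin_ext f c1 z - lin_ext f c2 z"
  proof -
    have "lin_ext f c1 z = (\<Sum>b\<in>?S. c1 b * f b z)" by (rule lin_ext_sum) (use assms in auto)
    moreover have "lin_ext f c2 z = (\<Sum>b\<in>?S. c2 b * f b z)" by (rule lin_ext_sum) (use assms in auto)
    ultimately show ?thesis by simp
  qed
  finally show "lin_ext f (\<lambda>x. c1 x - c2 x) z = lin_ext f c1 z - lin_ext f c2 z" .
qed

lemma lin_ext_add:
  assumes "finite (spt c1)" "finite (spt c2)"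
  shows "lin_ext f (\<lambda>x. c1 x + c2 x) = (\<lambda>z. lin_ext f c1 z + lin_ext f c2 z)"
proof
  fix z
  let ?S = "spt c1 \<union> spt c2"
  have "lin_ext f (\<lambda>x. c1 x + c2 x) z = (\<Sum>b\<in>?S. (c1 b + c2 b) * f b z)"
    by (rule lin_ext_sum) (use assms in \<open>auto simp: spt_def\<close>)
  also have "\<dots> = (\<Sum>b\<in>?S. c1 b * f b z) + (\<Sum>b\<in>?S. c2 b * f b z)"
    by (simp add: distrib_right sum.distrib)
  also have "\<dots> = lin_ext f c1 z + lin_ext f c2 z"
  proof -
    have "lin_ext f c1 z = (\<Sum>b\<in>?S. c1 b * f b z)" by (rule lin_ext_sum) (use assms in auto)
    moreover have "lin_ext f c2 z = (\<Sum>b\<in>?S. c2 b * f b z)" by (rule lin_ext_sum) (use assms in auto)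
    ultimately show ?thesis by simp
  qed
  finally show "lin_ext f (\<lambda>x. c1 x + c2 x) z = lin_ext f c1 z + lin_ext f c2 z" .
qed

lemma lin_ext_spt: "spt (lin_ext f c) \<subseteq> (\<Union>b\<in>spt c. spt (f b))"
proof
  fix x assume "x \<in> spt (lin_ext f c)"
  then have "(\<Sum>b\<in>spt c. c b * f b x) \<noteq> 0" by (simp add: spt_def lin_ext_def)
  then obtain b where "b \<in> spt c" "c b * f b x \<noteq> 0" using sum.not_neutral_contains_not_neutral by blast
  then show "x \<in> (\<Union>b\<in>spt c. spt (f b))" by (auto simp: spt_def)
qed

lemma sum_dlt: "finite S \<Longrightarrow> spt c \<subseteq> S \<Longrightarrow> (\<Sum>b\<in>S. c b * dlt b z) = c z"
proof -
  assume a: "finite S" "spt c \<subseteq> S"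
  show ?thesis
  proof (cases "z \<in> S")
    case True
    have "(\<Sum>b\<in>S. c b * dlt b z) = (\<Sum>b\<in>S. if b = z then c b else 0)"
      by (rule sum.cong) (auto simp: dlt_def)
    then show ?thesis using a True by simp
  next
    case False
    then have "c z = 0" using a by (auto simp: spt_def)
    moreover have "\<forall>b\<in>S. c b * dlt b z = 0" using False by (auto simp: dlt_def)
    ultimately show ?thesis by (simp add: sum.neutral)
  qed
qed


definition mdeg :: "kmonomial \<Rightarrow> nat \<Rightarrow> nat" where
  "mdeg b i = (if i \<in> fst b then 1 else 0) + snd b i"

lemma KB_iff: "(J,\<alpha>) \<in> koszul_basis m K \<longleftrightarrow> J \<subseteq> {1..m} \<and> supp_exp \<alpha> \<in> K"
  by (simp add: koszul_basis_def)

lemma KB_fin: "(J,\<alpha>) \<in> koszul_basis m K \<Longrightarrow> finite J"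
  by (auto simp: koszul_basis_def intro: finite_subset)

lemma D_expand: "koszul_d_basis m K (J,\<alpha>) = (\<lambda>b'. \<Sum>j\<in>J. if (J-{j}, \<alpha>(j:=Suc(\<alpha> j))) \<in> koszul_basis m K
     then koszul_sign j J * dlt (J-{j}, \<alpha>(j:=Suc(\<alpha> j))) b' else 0)"
proof
  fix b'
  show "koszul_d_basis m K (J,\<alpha>) b' = (\<Sum>j\<in>J. if (J-{j}, \<alpha>(j:=Suc(\<alpha> j))) \<in> koszul_basis m K
     then koszul_sign j J * dlt (J-{j}, \<alpha>(j:=Suc(\<alpha> j))) b' else 0)"
  proof (cases "b' \<in> koszul_basis m K")
    case True
    then show ?thesis unfolding koszul_d_basis_def
      by (auto simp: dlt_def intro!: sum.cong)
  next
    case False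
    then have "\<forall>j\<in>J. (if (J-{j}, \<alpha>(j:=Suc(\<alpha> j))) \<in> koszul_basis m K
     then koszul_sign j J * dlt (J-{j}, \<alpha>(j:=Suc(\<alpha> j))) b' else 0) = 0"
      by (auto simp: dlt_def)
    then show ?thesis using False unfolding koszul_d_basis_def
      by (simp add: sum.neutral)
  qed
qed

lemma D_nz: "koszul_d_basis m K (J,\<alpha>) y \<noteq> 0 \<Longrightarrow>
   y \<in> koszul_basis m K \<and> (\<exists>j\<in>J. y = (J-{j}, \<alpha>(j:=Suc(\<alpha> j))))"
proof -
  assume "koszul_d_basis m K (J,\<alpha>) y \<noteq> 0"
  then have "(\<Sum>j\<in>J. if (J-{j}, \<alpha>(j:=Suc(\<alpha> j))) \<in> koszul_basis m K
     then koszul_sign j J * dlt (J-{j}, \<alpha>(j:=Suc(\<alpha> j))) y else 0) \<noteq> 0"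
    by (simp add: D_expand)
  then obtain j where "j \<in> J" "(if (J-{j}, \<alpha>(j:=Suc(\<alpha> j))) \<in> koszul_basis m K
     then koszul_sign j J * dlt (J-{j}, \<alpha>(j:=Suc(\<alpha> j))) y else 0) \<noteq> 0"
    using sum.not_neutral_contains_not_neutral by blast
  then show ?thesis by (auto simp: dlt_def split: if_splits)
qed

lemma D_fin: "finite J \<Longrightarrow> finite (spt (koszul_d_basis m K (J,\<alpha>)))"
proof -
  assume f: "finite J"
  have "spt (koszul_d_basis m K (J,\<alpha>)) \<subseteq> (\<lambda>j. (J-{j}, \<alpha>(j:=Suc(\<alpha> j)))) ` J"
    using D_nz by (fastforce simp: spt_def)
  then show ?thesis using f finite_subset by blast
qed

lemma D_fin': "b \<in> koszul_basis m K \<Longrightarrow> finite (spt (koszul_d_basis m K b))"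
  by (cases b) (simp add: D_fin KB_fin)

lemma D_sptKB: "spt (koszul_d_basis m K b) \<subseteq> koszul_basis m K"
  by (cases b) (use D_nz in \<open>auto simp: spt_def\<close>)

lemma mdeg_step: "j \<in> J \<Longrightarrow> mdeg (J-{j}, \<alpha>(j:=Suc(\<alpha> j))) = mdeg (J,\<alpha>)"
  by (auto simp: mdeg_def)

lemma D_mdeg: "koszul_d_basis m K b y \<noteq> 0 \<Longrightarrow> mdeg y = mdeg b"
  by (cases b) (auto dest!: D_nz simp: mdeg_step)

lemma RB_iff: "b \<in> R_basis m K \<longleftrightarrow> b \<in> koszul_basis m K \<and> (\<forall>i. mdeg b i \<le> 1)"
proof (cases b)
  case (Pair J \<alpha>)
  have "(\<not> in_R_ideal (J,\<alpha>)) \<longleftrightarrow> (\<forall>i. mdeg (J,\<alpha>) i \<le> 1)"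
  proof
    assume "\<not> in_R_ideal (J,\<alpha>)"
    then have h0: "\<forall>i. \<not> 2 \<le> \<alpha> i" and h2: "\<forall>i\<in>J. \<alpha> i = 0"
      unfolding in_R_ideal_def by auto
    have h1: "\<forall>i. \<alpha> i \<le> 1"
    proof
      fix i show "\<alpha> i \<le> 1" using h0[rule_format, of i] by simp
    qed
    show "\<forall>i. mdeg (J,\<alpha>) i \<le> 1"
    proof
      fix i show "mdeg (J,\<alpha>) i \<le> 1" using h1[rule_format, of i] h2 by (cases "i \<in> J") (auto simp: mdeg_def)
    qed
  next
    assume a: "\<forall>i. mdeg (J,\<alpha>) i \<le> 1"
    show "\<not> in_R_ideal (J,\<alpha>)" unfolding in_R_ideal_def
    proof (auto)
      fix i assume "2 \<le> \<alpha> i" then show False using a[rule_format, of i] by (auto simp: mdeg_def split: if_splits)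
    next
      fix i assume "i \<in> J" "Suc 0 \<le> \<alpha> i" then show False using a[rule_format, of i] by (auto simp: mdeg_def)
    qed
  qed
  then show ?thesis using Pair by (auto simp: R_basis_def)
qed


definition piv :: "kmonomial \<Rightarrow> nat" where "piv b = (LEAST i. 2 \<le> mdeg b i)"

definition Hb :: "kmonomial \<Rightarrow> kmonomial \<Rightarrow> int" where
  "Hb b = (if piv b \<notin> fst b then
      (\<lambda>x. koszul_sign (piv b) (insert (piv b) (fst b)) *
           dlt (insert (piv b) (fst b), (snd b)(piv b := snd b (piv b) - 1)) x)
    else (\<lambda>x. 0))"

lemma ideal_mdeg: "in_R_ideal b \<Longrightarrow> \<exists>i. 2 \<le> mdeg b i"
proof (cases b)
  case (Pair J \<alpha>)
  assume "in_R_ideal b"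
  then consider i where "2 \<le> \<alpha> i" | i where "i \<in> J" "1 \<le> \<alpha> i"
    using Pair by (auto simp: in_R_ideal_def)
  then show ?thesis
  proof cases
    case 1 then have "2 \<le> mdeg b i" using Pair by (simp add: mdeg_def)
    then show ?thesis by blast
  next
    case 2 then have "2 \<le> mdeg b i" using Pair by (simp add: mdeg_def)
    then show ?thesis by blast
  qed
qed

lemma piv_mdeg: "in_R_ideal b \<Longrightarrow> 2 \<le> mdeg b (piv b)"
  unfolding piv_def using ideal_mdeg by (metis LeastI_ex)

lemma piv_eq: "mdeg b = mdeg b' \<Longrightarrow> piv b = piv b'"
  by (simp add: piv_def)

lemma sign_sq: "koszul_sign j J * koszul_sign j J = 1"
  by (simp add: koszul_sign_def power_mult_distrib[symmetric])

lemma sign_cancel: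
  assumes f: "finite J" and i: "i \<notin> J" and j: "j \<in> J"
  shows "koszul_sign i (insert i J) * koszul_sign j (insert i J)
         + koszul_sign j J * koszul_sign i (insert i (J - {j})) = 0"
proof -
  define a where "a = card {k\<in>J. k < i}"
  define c where "c = card {k\<in>J. k < j}"
  have ij: "i \<noteq> j" using i j by auto
  have e1: "{k\<in>insert i J. k < i} = {k\<in>J. k < i}" by auto
  have e2: "card {k\<in>insert i J. k < j} = (if i < j then Suc c else c)"
  proof (cases "i < j")
    case True
    then have "{k\<in>insert i J. k < j} = insert i {k\<in>J. k < j}" by auto
    then show ?thesis using True f i by (simp add: c_def)
  next
    case False
    then have "{k\<in>insert i J. k < j} = {k\<in>J. k < j}" using ij by auto
    then show ?thesis using False by (simp add: c_def)
  qed
  have e3: "card {k\<in>insert i (J - {j}). k < i} + (if j < i then 1 else 0) = a"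
  proof (cases "j < i")
    case True
    then have "{k\<in>J. k < i} = insert j {k\<in>insert i (J - {j}). k < i}" using j by auto
    moreover have "j \<notin> {k\<in>insert i (J - {j}). k < i}" using ij by auto
    ultimately show ?thesis using True f by (simp add: a_def)
  next
    case False
    then have "{k\<in>insert i (J - {j}). k < i} = {k\<in>J. k < i}" by auto
    then show ?thesis using False by (simp add: a_def)
  qed
  show ?thesis
  proof (cases "i < j")
    case True
    then have "\<not> j < i" by auto
    then show ?thesis using True e2 e3 unfolding koszul_sign_def e1 a_def[symmetric] c_def[symmetric]
      by simp
  next
    case False
    then have "j < i" using ij by auto
    then obtain a' where "a = Suc a'" "card {k\<in>insert i (J - {j}). k < i} = a'" using e3 by auto
    then show ?thesis using False e2 unfolding koszul_sign_def e1 a_def[symmetric] c_def[symmetric]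
      by simp
  qed
qed


lemma supp_exp_dec: "2 \<le> \<alpha> i \<Longrightarrow> supp_exp (\<alpha>(i := \<alpha> i - 1)) = supp_exp \<alpha>"
  by (auto simp: supp_exp_def)

lemma supp_exp_inc: "1 \<le> \<alpha> i \<Longrightarrow> supp_exp (\<alpha>(i := Suc (\<alpha> i))) = supp_exp \<alpha>"
  by (auto simp: supp_exp_def)

lemma Hb_in: "piv b \<in> fst b \<Longrightarrow> Hb b = (\<lambda>x. 0)"
  by (simp add: Hb_def)

lemma Hb_out: "piv (J,\<alpha>) = i \<Longrightarrow> i \<notin> J \<Longrightarrow>
   Hb (J,\<alpha>) = (\<lambda>x. koszul_sign i (insert i J) * dlt (insert i J, \<alpha>(i := \<alpha> i - 1)) x)"
  by (simp add: Hb_def)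

lemma Hb_spt:
  assumes sc: "\<forall>\<sigma>\<in>K. \<sigma> \<subseteq> {1..m}" and bK: "b \<in> koszul_basis m K" and bI: "in_R_ideal b"
  shows "spt (Hb b) \<subseteq> koszul_basis m K \<and> finite (spt (Hb b))"
proof (cases b)
  case (Pair J \<alpha>)
  define i where "i = piv (J,\<alpha>)"
  have mi: "2 \<le> mdeg (J,\<alpha>) i" using piv_mdeg[OF bI] Pair i_def by simp
  show ?thesis
  proof (cases "i \<in> J")
    case True
    then show ?thesis using Hb_in[of b] Pair i_def by (simp add: spt_def)
  next
    case False
    then have ai: "2 \<le> \<alpha> i" using mi by (simp add: mdeg_def)
    have sK: "supp_exp \<alpha> \<in> K" and JM: "J \<subseteq> {1..m}" using bK Pair by (auto simp: koszul_basis_def)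
    have "i \<in> supp_exp \<alpha>" using ai by (simp add: supp_exp_def)
    then have iM: "i \<in> {1..m}" using sc sK by blast
    have "(insert i J, \<alpha>(i := \<alpha> i - 1)) \<in> koszul_basis m K"
      using JM iM sK supp_exp_dec[of \<alpha> i, OF ai] by (simp add: koszul_basis_def)
    moreover have "spt (Hb b) \<subseteq> {(insert i J, \<alpha>(i := \<alpha> i - 1))}"
      using Hb_out[OF i_def[symmetric] False] Pair by (auto simp: spt_def dlt_def)
    ultimately show ?thesis using finite_subset by blast
  qed
qed

lemma htpy_basis0:
  assumes sc: "\<forall>\<sigma>\<in>K. \<sigma> \<subseteq> {1..m}" and bK: "(J,\<alpha>) \<in> koszul_basis m K" and bI: "in_R_ideal (J,\<alpha>)"
  shows "koszul_d m K (Hb (J,\<alpha>)) z + lin_ext Hb (koszul_d_basis m K (J,\<alpha>)) z = dlt (J,\<alpha>) z"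
proof -
  let ?KB = "koszul_basis m K"
  have fJ: "finite J" using bK KB_fin by simp
  have sK: "supp_exp \<alpha> \<in> K" and JM: "J \<subseteq> {1..m}" using bK by (auto simp: koszul_basis_def)
  define i where "i = piv (J,\<alpha>)"
  have mi: "2 \<le> mdeg (J,\<alpha>) i" using piv_mdeg[OF bI] i_def by simp
  define D' where "D' j = (J-{j}, \<alpha>(j:=Suc(\<alpha> j)))" for j
  have pivD: "piv (D' j) = i" if "j \<in> J" for j
    using mdeg_step[OF that] piv_eq i_def D'_def by metis
  define g where "g j = (if D' j \<in> ?KB then (\<lambda>x. koszul_sign j J * dlt (D' j) x) else (\<lambda>x. 0))" for j
  have hD: "lin_ext Hb (koszul_d_basis m K (J,\<alpha>)) z =
      (\<Sum>j\<in>J. if D' j \<in> ?KB then koszul_sign j J * Hb (D' j) z else 0)"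
  proof -
    have "koszul_d_basis m K (J,\<alpha>) = (\<lambda>x. \<Sum>j\<in>J. g j x)"
      unfolding D_expand g_def D'_def by (rule ext, rule sum.cong) auto
    moreover have "lin_ext Hb (\<lambda>x. \<Sum>j\<in>J. g j x) = (\<lambda>z. \<Sum>j\<in>J. lin_ext Hb (g j) z)"
    proof (rule lin_ext_comb[OF fJ], rule ballI)
      fix j show "finite (spt (g j))"
        by (rule finite_subset[of _ "{D' j}"]) (auto simp: g_def spt_def dlt_def)
    qed
    moreover have "lin_ext Hb (g j) z = (if D' j \<in> ?KB then koszul_sign j J * Hb (D' j) z else 0)" for j
      by (simp add: g_def lin_ext_dlt lin_ext_zero)
    ultimately show ?thesis by simp
  qed
  show ?thesis
  proof (cases "i \<in> J")
    case False
    then have ai: "2 \<le> \<alpha> i" using mi by (simp add: mdeg_def)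
    have "i \<in> supp_exp \<alpha>" using ai by (simp add: supp_exp_def)
    then have iM: "i \<in> {1..m}" using sc sK by blast
    define s where "s = koszul_sign i (insert i J)"
    define bh where "bh = (insert i J, \<alpha>(i := \<alpha> i - 1))"
    define E where "E j = (insert i J - {j}, (\<alpha>(i := \<alpha> i - 1))(j := Suc ((\<alpha>(i := \<alpha> i - 1)) j)))" for j
    define F where "F j = (insert i (J-{j}), (\<alpha>(j:=Suc(\<alpha> j)))(i := \<alpha> i - 1))" for j
    have Hbb: "Hb (J,\<alpha>) = (\<lambda>x. s * dlt bh x)"
      using Hb_out[OF i_def[symmetric] False] by (simp add: s_def bh_def)
    have dH: "koszul_d m K (Hb (J,\<alpha>)) z = s * koszul_d_basis m K bh z"
      unfolding Hbb koszul_d_def lin_ext_dlt by simp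
    have Ei: "E i = (J,\<alpha>)" using False ai by (auto simp: E_def)
    have EF: "E j = F j" if "j \<in> J" for j
      using that False by (auto simp: E_def F_def fun_upd_twist)
    have HD: "Hb (D' j) = (\<lambda>x. koszul_sign i (insert i (J-{j})) * dlt (F j) x)" if "j \<in> J" for j
    proof -
      have "i \<noteq> j" using that False by auto
      then show ?thesis using Hb_out[of "J-{j}" "\<alpha>(j:=Suc(\<alpha> j))" i] pivD[OF that] False
        by (simp add: D'_def F_def)
    qed
    have KBeq: "F j \<in> ?KB \<longleftrightarrow> D' j \<in> ?KB" if "j \<in> J" for j
    proof -
      have "i \<noteq> j" using that False by auto
      then have "supp_exp ((\<alpha>(j:=Suc(\<alpha> j)))(i := \<alpha> i - 1)) = supp_exp (\<alpha>(j:=Suc(\<alpha> j)))"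
        using supp_exp_dec[of "\<alpha>(j:=Suc(\<alpha> j))" i] ai by simp
      then show ?thesis using JM iM by (auto simp: F_def D'_def koszul_basis_def)
    qed
    have "koszul_d_basis m K bh z =
        (\<Sum>j\<in>insert i J. if E j \<in> ?KB then koszul_sign j (insert i J) * dlt (E j) z else 0)"
      unfolding bh_def D_expand E_def by simp
    also have "\<dots> = s * dlt (J,\<alpha>) z +
        (\<Sum>j\<in>J. if E j \<in> ?KB then koszul_sign j (insert i J) * dlt (E j) z else 0)"
      using fJ False Ei bK by (simp add: s_def)
    also have "\<dots> = s * dlt (J,\<alpha>) z +
        (\<Sum>j\<in>J. if F j \<in> ?KB then koszul_sign j (insert i J) * dlt (F j) z else 0)"
      by (intro arg_cong[where f="\<lambda>t. s * dlt (J,\<alpha>) z + t"] sum.cong) (auto simp: EF)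
    finally have kb: "koszul_d_basis m K bh z = s * dlt (J,\<alpha>) z +
        (\<Sum>j\<in>J. if F j \<in> ?KB then koszul_sign j (insert i J) * dlt (F j) z else 0)" .
    have hD2: "lin_ext Hb (koszul_d_basis m K (J,\<alpha>)) z =
        (\<Sum>j\<in>J. if F j \<in> ?KB then koszul_sign j J * (koszul_sign i (insert i (J-{j})) * dlt (F j) z) else 0)"
      unfolding hD by (rule sum.cong) (auto simp: HD KBeq)
    have canc: "s * (if F j \<in> ?KB then koszul_sign j (insert i J) * dlt (F j) z else 0)
        + (if F j \<in> ?KB then koszul_sign j J * (koszul_sign i (insert i (J-{j})) * dlt (F j) z) else 0) = 0"
      if "j \<in> J" for j
    proof -
      have "s * koszul_sign j (insert i J) + koszul_sign j J * koszul_sign i (insert i (J-{j})) = 0"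
        using sign_cancel[OF fJ False that] by (simp add: s_def)
      then have "(s * koszul_sign j (insert i J) + koszul_sign j J * koszul_sign i (insert i (J-{j}))) * dlt (F j) z = 0"
        by simp
      then show ?thesis by (simp add: algebra_simps)
    qed
    have "koszul_d m K (Hb (J,\<alpha>)) z + lin_ext Hb (koszul_d_basis m K (J,\<alpha>)) z
        = s * s * dlt (J,\<alpha>) z + (\<Sum>j\<in>J. s * (if F j \<in> ?KB then koszul_sign j (insert i J) * dlt (F j) z else 0)
        + (if F j \<in> ?KB then koszul_sign j J * (koszul_sign i (insert i (J-{j})) * dlt (F j) z) else 0))"
      unfolding dH kb hD2 by (simp add: algebra_simps sum.distrib sum_distrib_left)
    also have "\<dots> = dlt (J,\<alpha>) z"
      using canc sign_sq[of i "insert i J"] by (simp add: s_def)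
    finally show ?thesis .
  next
    case True
    then have ai: "1 \<le> \<alpha> i" using mi by (simp add: mdeg_def)
    have Hbb: "Hb (J,\<alpha>) = (\<lambda>x. 0)" using Hb_in[of "(J,\<alpha>)"] True i_def by simp
    have dH: "koszul_d m K (Hb (J,\<alpha>)) z = 0"
      unfolding Hbb koszul_d_def lin_ext_zero by simp
    have z0: "(if D' j \<in> ?KB then koszul_sign j J * Hb (D' j) z else 0) = 0" if "j \<in> J - {i}" for j
    proof -
      have "piv (D' j) \<in> fst (D' j)" using that pivD[of j] True by (auto simp: D'_def)
      then show ?thesis using Hb_in by simp
    qed
    have DiK: "D' i \<in> ?KB" using JM sK supp_exp_inc[of \<alpha> i, OF ai] by (auto simp: D'_def koszul_basis_def)
    have HDi: "Hb (D' i) = (\<lambda>x. koszul_sign i J * dlt (J,\<alpha>) x)"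
    proof -
      have "Hb (D' i) = (\<lambda>x. koszul_sign i (insert i (J-{i})) * dlt (insert i (J-{i}), (\<alpha>(i:=Suc(\<alpha> i)))(i := Suc (\<alpha> i) - 1)) x)"
        using Hb_out[of "J-{i}" "\<alpha>(i:=Suc(\<alpha> i))" i] pivD[OF True] by (simp add: D'_def)
      also have "\<dots> = (\<lambda>x. koszul_sign i J * dlt (J,\<alpha>) x)"
        using True by (simp add: insert_absorb)
      finally show ?thesis .
    qed
    have "lin_ext Hb (koszul_d_basis m K (J,\<alpha>)) z = koszul_sign i J * (koszul_sign i J * dlt (J,\<alpha>) z)"
      unfolding hD using sum.remove[OF fJ True, of "\<lambda>j. if D' j \<in> ?KB then koszul_sign j J * Hb (D' j) z else 0"]
        z0 DiK HDi by simp
    then show ?thesis using dH sign_sq[of i J] by (simp add: mult.assoc[symmetric])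
  qed
qed


lemma C_iff: "c \<in> koszul_complex m K \<longleftrightarrow> finite (spt c) \<and> spt c \<subseteq> koszul_basis m K"
  by (simp add: koszul_complex_def free_on_def spt_def)

lemma R_iff: "c \<in> R_complex m K \<longleftrightarrow> finite (spt c) \<and> spt c \<subseteq> R_basis m K"
  by (simp add: R_complex_def free_on_def spt_def)

lemma RB_KB: "R_basis m K \<subseteq> koszul_basis m K"
  by (auto simp: R_basis_def)

lemma R_C: "r \<in> R_complex m K \<Longrightarrow> r \<in> koszul_complex m K"
  using RB_KB by (auto simp: C_iff R_iff)

lemma spt_diff: "spt (\<lambda>x. c1 x - c2 x) \<subseteq> spt c1 \<union> spt c2"
  by (auto simp: spt_def)

lemma spt_add: "spt (\<lambda>x. c1 x + c2 x) \<subseteq> spt c1 \<union> spt c2"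
  by (auto simp: spt_def)

lemma C_diff: "c1 \<in> koszul_complex m K \<Longrightarrow> c2 \<in> koszul_complex m K \<Longrightarrow> (\<lambda>x. c1 x - c2 x) \<in> koszul_complex m K"
  unfolding C_iff using spt_diff[of c1 c2] by (meson finite_UnI finite_subset le_sup_iff order_trans)

lemma C_add: "c1 \<in> koszul_complex m K \<Longrightarrow> c2 \<in> koszul_complex m K \<Longrightarrow> (\<lambda>x. c1 x + c2 x) \<in> koszul_complex m K"
  unfolding C_iff using spt_add[of c1 c2] by (meson finite_UnI finite_subset le_sup_iff order_trans)

lemma R_diff: "c1 \<in> R_complex m K \<Longrightarrow> c2 \<in> R_complex m K \<Longrightarrow> (\<lambda>x. c1 x - c2 x) \<in> R_complex m K"
  unfolding R_iff using spt_diff[of c1 c2] by (meson finite_UnI finite_subset le_sup_iff order_trans)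

lemma C_zero: "(\<lambda>x. 0) \<in> koszul_complex m K"
  by (simp add: C_iff spt_def)

lemma d_C: assumes "c \<in> koszul_complex m K" shows "koszul_d m K c \<in> koszul_complex m K"
proof -
  have s: "spt (koszul_d m K c) \<subseteq> (\<Union>b\<in>spt c. spt (koszul_d_basis m K b))"
    unfolding koszul_d_def by (rule lin_ext_spt)
  have "finite (\<Union>b\<in>spt c. spt (koszul_d_basis m K b))"
    using assms D_fin' by (auto simp: C_iff)
  moreover have "(\<Union>b\<in>spt c. spt (koszul_d_basis m K b)) \<subseteq> koszul_basis m K"
    using D_sptKB by blast
  ultimately show ?thesis using s by (auto simp: C_iff intro: finite_subset)
qed

lemma d_diff: "c1 \<in> koszul_complex m K \<Longrightarrow> c2 \<in> koszul_complex m K \<Longrightarrow>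
   koszul_d m K (\<lambda>x. c1 x - c2 x) = (\<lambda>z. koszul_d m K c1 z - koszul_d m K c2 z)"
  unfolding koszul_d_def by (rule lin_ext_diff) (auto simp: C_iff)

lemma d_add: "c1 \<in> koszul_complex m K \<Longrightarrow> c2 \<in> koszul_complex m K \<Longrightarrow>
   koszul_d m K (\<lambda>x. c1 x + c2 x) = (\<lambda>z. koszul_d m K c1 z + koszul_d m K c2 z)"
  unfolding koszul_d_def by (rule lin_ext_add) (auto simp: C_iff)

lemma d_zero: "koszul_d m K (\<lambda>x. 0) = (\<lambda>x. 0)"
  unfolding koszul_d_def by (rule lin_ext_zero)

lemma rho_R: "c \<in> koszul_complex m K \<Longrightarrow> rho m K c \<in> R_complex m K"
proof -
  assume "c \<in> koszul_complex m K"
  moreover have "spt (rho m K c) \<subseteq> spt c \<inter> R_basis m K" by (auto simp: spt_def rho_def split: if_splits)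
  ultimately show ?thesis by (auto simp: C_iff R_iff intro: finite_subset)
qed

lemma rho_id: "r \<in> R_complex m K \<Longrightarrow> rho m K r = r"
  by (auto simp: R_iff rho_def spt_def intro!: ext)

lemma rho_idem: "rho m K (rho m K c) = rho m K c"
  by (auto simp: rho_def intro!: ext)

lemma rho_diff: "rho m K (\<lambda>x. c1 x - c2 x) = (\<lambda>x. rho m K c1 x - rho m K c2 x)"
  by (auto simp: rho_def intro!: ext)

lemma d_rho: assumes cC: "c \<in> koszul_complex m K"
  shows "koszul_d m K (rho m K c) = rho m K (koszul_d m K c)"
proof
  fix z
  have f: "finite (spt c)" and sK: "spt c \<subseteq> koszul_basis m K" using cC by (auto simp: C_iff)
  have l: "koszul_d m K (rho m K c) z = (\<Sum>b\<in>spt c. rho m K c b * koszul_d_basis m K b z)"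
    unfolding koszul_d_def by (rule lin_ext_sum[OF f]) (auto simp: spt_def rho_def)
  have r: "rho m K (koszul_d m K c) z = (if z \<in> R_basis m K then (\<Sum>b\<in>spt c. c b * koszul_d_basis m K b z) else 0)"
    by (simp add: rho_def koszul_d_def lin_ext_def spt_def)
  have t: "rho m K c b * koszul_d_basis m K b z = (if z \<in> R_basis m K then c b * koszul_d_basis m K b z else 0)"
    if "b \<in> spt c" for b
  proof (cases "koszul_d_basis m K b z = 0")
    case True then show ?thesis by simp
  next
    case False
    then have "mdeg z = mdeg b" by (rule D_mdeg)
    moreover have "z \<in> koszul_basis m K"
    proof -
      have "z \<in> spt (koszul_d_basis m K b)" using False by (simp add: spt_def)
      then show ?thesis using D_sptKB by blast
    qed
    moreover have "b \<in> koszul_basis m K" using that sK by auto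
    ultimately have "b \<in> R_basis m K \<longleftrightarrow> z \<in> R_basis m K" by (simp add: RB_iff)
    then show ?thesis by (simp add: rho_def)
  qed
  show "koszul_d m K (rho m K c) z = rho m K (koszul_d m K c) z"
    unfolding l r using t by (auto intro: sum.cong sum.neutral)
qed

lemma acyc:
  assumes sc: "\<forall>\<sigma>\<in>K. \<sigma> \<subseteq> {1..m}" and nC: "n \<in> koszul_complex m K"
    and rn: "rho m K n = (\<lambda>x. 0)" and dn: "koszul_d m K n = (\<lambda>x. 0)"
  shows "\<exists>y\<in>koszul_complex m K. n = koszul_d m K y"
proof -
  have f: "finite (spt n)" and sK: "spt n \<subseteq> koszul_basis m K" using nC by (auto simp: C_iff)
  have bI: "in_R_ideal b" if "b \<in> spt n" for b
  proof -
    have "rho m K n b = 0" using rn by simp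
    then have "b \<notin> R_basis m K" using that by (auto simp: rho_def spt_def split: if_splits)
    then show ?thesis using that sK by (auto simp: R_basis_def)
  qed
  have Hs: "spt (Hb b) \<subseteq> koszul_basis m K \<and> finite (spt (Hb b))" if "b \<in> spt n" for b
    using Hb_spt[OF sc _ bI[OF that]] that sK by blast
  define y where "y = lin_ext Hb n"
  have yC: "y \<in> koszul_complex m K"
  proof -
    have "spt y \<subseteq> (\<Union>b\<in>spt n. spt (Hb b))" unfolding y_def by (rule lin_ext_spt)
    moreover have "finite (\<Union>b\<in>spt n. spt (Hb b))" using f Hs by auto
    moreover have "(\<Union>b\<in>spt n. spt (Hb b)) \<subseteq> koszul_basis m K" using Hs by blast
    ultimately show ?thesis by (auto simp: C_iff intro: finite_subset)
  qed
  have "koszul_d m K y = n"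
  proof
    fix z
    have y': "y = (\<lambda>x. \<Sum>b\<in>spt n. n b * Hb b x)" by (simp add: y_def lin_ext_def spt_def)
    have fs: "\<forall>b\<in>spt n. finite (spt (\<lambda>x. n b * Hb b x))"
    proof
      fix b assume "b \<in> spt n"
      then have "finite (spt (Hb b))" using Hs by blast
      moreover have "spt (\<lambda>x. n b * Hb b x) \<subseteq> spt (Hb b)" by (auto simp: spt_def)
      ultimately show "finite (spt (\<lambda>x. n b * Hb b x))" using finite_subset by blast
    qed
    have fs2: "\<forall>b\<in>spt n. finite (spt (\<lambda>x. n b * koszul_d_basis m K b x))"
    proof
      fix b assume "b \<in> spt n"
      then have "finite (spt (koszul_d_basis m K b))" using sK D_fin' by blast
      moreover have "spt (\<lambda>x. n b * koszul_d_basis m K b x) \<subseteq> spt (koszul_d_basis m K b)" by (auto simp: spt_def)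
      ultimately show "finite (spt (\<lambda>x. n b * koszul_d_basis m K b x))" using finite_subset by blast
    qed
    have "koszul_d m K y z = (\<Sum>b\<in>spt n. lin_ext (koszul_d_basis m K) (\<lambda>x. n b * Hb b x) z)"
      unfolding y' koszul_d_def lin_ext_comb[OF f fs] by simp
    also have "\<dots> = (\<Sum>b\<in>spt n. n b * koszul_d m K (Hb b) z)"
      unfolding koszul_d_def by (rule sum.cong[OF refl], rule lin_ext_smult) (use Hs in blast)
    also have "\<dots> = (\<Sum>b\<in>spt n. n b * dlt b z - n b * lin_ext Hb (koszul_d_basis m K b) z)"
    proof (rule sum.cong[OF refl])
      fix b assume b: "b \<in> spt n"
      obtain J \<alpha> where bb: "b = (J,\<alpha>)" by (cases b)
      have "koszul_d m K (Hb b) z = dlt b z - lin_ext Hb (koszul_d_basis m K b) z"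
        using htpy_basis0[OF sc, of J \<alpha> z] bI[OF b] sK b bb by (auto simp: algebra_simps)
      then show "n b * koszul_d m K (Hb b) z = n b * dlt b z - n b * lin_ext Hb (koszul_d_basis m K b) z"
        by (metis right_diff_distrib)
    qed
    also have "\<dots> = n z - (\<Sum>b\<in>spt n. n b * lin_ext Hb (koszul_d_basis m K b) z)"
      by (simp add: sum_subtractf sum_dlt[OF f])
    also have "(\<Sum>b\<in>spt n. n b * lin_ext Hb (koszul_d_basis m K b) z) = 0"
    proof -
      have "(\<Sum>b\<in>spt n. n b * lin_ext Hb (koszul_d_basis m K b) z)
          = (\<Sum>b\<in>spt n. lin_ext Hb (\<lambda>x. n b * koszul_d_basis m K b x) z)"
        by (rule sum.cong[OF refl], rule lin_ext_smult[symmetric]) (use sK D_fin' in blast)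
      also have "\<dots> = lin_ext Hb (\<lambda>x. \<Sum>b\<in>spt n. n b * koszul_d_basis m K b x) z"
        unfolding lin_ext_comb[OF f fs2] by simp
      also have "(\<lambda>x. \<Sum>b\<in>spt n. n b * koszul_d_basis m K b x) = koszul_d m K n"
        by (simp add: koszul_d_def lin_ext_def spt_def)
      finally show ?thesis using dn lin_ext_zero[of Hb] by simp
    qed
    finally show "koszul_d m K y z = n z" by simp
  qed
  then show ?thesis using yC by auto
qed


lemma coset_eq:
  fixes S :: "('b \<Rightarrow> int) set"
  assumes z: "(\<lambda>b. 0) \<in> S" and sub: "\<forall>s1\<in>S. \<forall>s2\<in>S. (\<lambda>b. s1 b - s2 b) \<in> S"
  shows "coset_of x S = coset_of y S \<longleftrightarrow> (\<lambda>b. x b - y b) \<in> S"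
proof
  have neg: "(\<lambda>b. - s b) \<in> S" if "s \<in> S" for s
  proof -
    show ?thesis using sub[rule_format, OF z that] by simp
  qed
  have add: "(\<lambda>b. s1 b + s2 b) \<in> S" if "s1 \<in> S" "s2 \<in> S" for s1 s2
  proof -
    show ?thesis using sub[rule_format, OF that(1) neg[OF that(2)]] by simp
  qed
  {
    assume e: "coset_of x S = coset_of y S"
    have "x \<in> coset_of x S" unfolding coset_of_def
      by (rule image_eqI[of _ _ "\<lambda>b. 0"]) (auto simp: z)
    then have "x \<in> coset_of y S" using e by simp
    then obtain s where s: "s \<in> S" "x = (\<lambda>b. y b + s b)" unfolding coset_of_def by blast
    then have "(\<lambda>b. x b - y b) = s" by auto
    then show "(\<lambda>b. x b - y b) \<in> S" using s by simp
  }
  {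
    assume d: "(\<lambda>b. x b - y b) \<in> S"
    have n: "(\<lambda>b. y b - x b) \<in> S" using neg[OF d] by simp
    show "coset_of x S = coset_of y S"
    proof
      show "coset_of x S \<subseteq> coset_of y S"
      proof
        fix w assume "w \<in> coset_of x S"
        then obtain s where s: "s \<in> S" "w = (\<lambda>b. x b + s b)" unfolding coset_of_def by blast
        have "(\<lambda>b. (x b - y b) + s b) \<in> S" using add[OF d s(1)] by simp
        moreover have "w = (\<lambda>b. y b + ((x b - y b) + s b))" using s by auto
        ultimately show "w \<in> coset_of y S" unfolding coset_of_def
          by (intro image_eqI[where x="\<lambda>b. (x b - y b) + s b"]) auto
      qed
    next
      show "coset_of y S \<subseteq> coset_of x S"
      proof
        fix w assume "w \<in> coset_of y S"
        then obtain s where s: "s \<in> S" "w = (\<lambda>b. y b + s b)" unfolding coset_of_def by blast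
        have "(\<lambda>b. (y b - x b) + s b) \<in> S" using add[OF n s(1)] by simp
        moreover have "w = (\<lambda>b. x b + ((y b - x b) + s b))" using s by auto
        ultimately show "w \<in> coset_of x S" unfolding coset_of_def
          by (intro image_eqI[where x="\<lambda>b. (y b - x b) + s b"]) auto
      qed
    qed
  }
qed

lemma coset_mem: "(\<lambda>b. 0) \<in> S \<Longrightarrow> x \<in> coset_of x S"
  unfolding coset_of_def by (rule image_eqI[of _ _ "\<lambda>b. 0"]) auto

theorem lemma4p4:
  fixes m :: nat and K :: "nat set set"
  assumes "simplicial_complex_on m K"
  shows "induces_iso_in_cohomology (koszul_complex m K) (koszul_d m K)
           (R_complex m K) (R_d m K) (rho m K)"
proof -
  let ?C = "koszul_complex m K" and ?d = "koszul_d m K" and ?R = "R_complex m K"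
    and ?dR = "R_d m K" and ?r = "rho m K"
  have sc: "\<forall>\<sigma>\<in>K. \<sigma> \<subseteq> {1..m}" using assms by (simp add: simplicial_complex_on_def)
  define B where "B = ?d ` ?C"
  define BR where "BR = ?dR ` ?R"
  have dR_eq: "?dR r = ?d r" if "r \<in> ?R" for r
    using that R_C[OF that] d_rho[of r m K] rho_id[OF that] by (simp add: R_d_def)
  have BR_eq: "BR = ?d ` ?R" unfolding BR_def using dR_eq by (auto simp: image_def)
  have B0: "(\<lambda>b. 0) \<in> B" unfolding B_def using C_zero d_zero by (metis image_eqI)
  have Bsub: "\<forall>s1\<in>B. \<forall>s2\<in>B. (\<lambda>b. s1 b - s2 b) \<in> B"
  proof (intro ballI)
    fix s1 s2 assume "s1 \<in> B" "s2 \<in> B"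
    then obtain c1 c2 where c: "c1 \<in> ?C" "c2 \<in> ?C" "s1 = ?d c1" "s2 = ?d c2" unfolding B_def by blast
    then have "(\<lambda>b. s1 b - s2 b) = ?d (\<lambda>x. c1 x - c2 x)" using d_diff by simp
    then show "(\<lambda>b. s1 b - s2 b) \<in> B" unfolding B_def using C_diff[OF c(1,2)] by blast
  qed
  have R0: "(\<lambda>b. 0) \<in> ?R" by (simp add: R_iff spt_def)
  have BR0: "(\<lambda>b. 0) \<in> BR" unfolding BR_eq using R0 d_zero by (metis image_eqI)
  have BRsub: "\<forall>s1\<in>BR. \<forall>s2\<in>BR. (\<lambda>b. s1 b - s2 b) \<in> BR"
  proof (intro ballI)
    fix s1 s2 assume "s1 \<in> BR" "s2 \<in> BR"
    then obtain c1 c2 where c: "c1 \<in> ?R" "c2 \<in> ?R" "s1 = ?d c1" "s2 = ?d c2" unfolding BR_eq by blast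
    then have "(\<lambda>b. s1 b - s2 b) = ?d (\<lambda>x. c1 x - c2 x)" using d_diff R_C by simp
    then show "(\<lambda>b. s1 b - s2 b) \<in> BR" unfolding BR_eq using R_diff[OF c(1,2)] by blast
  qed
  have ind: "induced_map ?R ?dR ?r (coset_of z B) = coset_of (?r z) BR"
    if zC: "z \<in> ?C" for z
  proof -
    have ne: "\<exists>w. w \<in> coset_of z B" using coset_mem[OF B0] by blast
    define z' where "z' = (SOME w. w \<in> coset_of z B)"
    have "z' \<in> coset_of z B" unfolding z'_def using ne by (rule someI_ex)
    then obtain y where y: "y \<in> ?C" "z' = (\<lambda>b. z b + ?d y b)"
      unfolding coset_of_def B_def by blast
    have "(\<lambda>b. ?r z' b - ?r z b) = ?r (?d y)"
      using y by (auto simp: rho_def intro!: ext)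
    also have "\<dots> = ?d (?r y)" using d_rho[OF y(1)] by simp
    finally have "(\<lambda>b. ?r z' b - ?r z b) \<in> BR" unfolding BR_eq using rho_R[OF y(1)] by blast
    then have "coset_of (?r z') BR = coset_of (?r z) BR" using coset_eq[OF BR0 BRsub] by blast
    moreover have "induced_map ?R ?dR ?r (coset_of z B) = coset_of (?r z') BR"
      unfolding induced_map_def BR_def z'_def ..
    ultimately show ?thesis by simp
  qed
  have part1: "\<forall>c\<in>?C. ?r c \<in> ?R" using rho_R by blast
  have part2: "\<forall>c\<in>?C. ?r (?d c) = ?dR (?r c)"
    using d_rho rho_idem by (simp add: R_d_def)
  have H1: "cohomology ?C ?d = (\<lambda>z. coset_of z B) ` {z \<in> ?C. ?d z = (\<lambda>_. 0)}"
    by (simp add: cohomology_def B_def)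
  have H2: "cohomology ?R ?dR = (\<lambda>z. coset_of z BR) ` {z \<in> ?R. ?dR z = (\<lambda>_. 0)}"
    by (simp add: cohomology_def BR_def)
  have inj: "inj_on (induced_map ?R ?dR ?r) (cohomology ?C ?d)"
  proof (rule inj_onI)
    fix c1 c2 assume c1: "c1 \<in> cohomology ?C ?d" and c2: "c2 \<in> cohomology ?C ?d"
      and e: "induced_map ?R ?dR ?r c1 = induced_map ?R ?dR ?r c2"
    obtain z1 where z1: "z1 \<in> ?C" "?d z1 = (\<lambda>_. 0)" "c1 = coset_of z1 B" using c1 H1 by auto
    obtain z2 where z2: "z2 \<in> ?C" "?d z2 = (\<lambda>_. 0)" "c2 = coset_of z2 B" using c2 H1 by auto
    have "coset_of (?r z1) BR = coset_of (?r z2) BR" using e ind z1 z2 by simp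
    then have "(\<lambda>b. ?r z1 b - ?r z2 b) \<in> BR" using coset_eq[OF BR0 BRsub] by blast
    then obtain r where r: "r \<in> ?R" "(\<lambda>b. ?r z1 b - ?r z2 b) = ?d r" unfolding BR_eq by blast
    define zz where "zz = (\<lambda>b. z1 b - z2 b)"
    have zzC: "zz \<in> ?C" unfolding zz_def using C_diff z1 z2 by blast
    have dzz: "?d zz = (\<lambda>_. 0)" unfolding zz_def using d_diff[OF z1(1) z2(1)] z1 z2 by simp
    have rzz: "?r zz = ?d r" unfolding zz_def rho_diff using r by simp
    have rzC: "?r zz \<in> ?C" using R_C rho_R zzC by blast
    define n where "n = (\<lambda>b. zz b - ?r zz b)"
    have nC: "n \<in> ?C" unfolding n_def using C_diff[OF zzC rzC] .
    have rn: "?r n = (\<lambda>_. 0)" unfolding n_def rho_diff rho_idem by simp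
    have dn: "?d n = (\<lambda>_. 0)" unfolding n_def
      using d_diff[OF zzC rzC] d_rho[OF zzC] dzz by (simp add: rho_def)
    obtain y where y: "y \<in> ?C" "n = ?d y" using acyc[OF sc nC rn dn] by blast
    have "zz = (\<lambda>b. n b + ?r zz b)" by (simp add: n_def)
    also have "\<dots> = (\<lambda>b. ?d y b + ?d r b)" using y rzz by simp
    also have "\<dots> = ?d (\<lambda>b. y b + r b)" using d_add[OF y(1) R_C[OF r(1)]] by simp
    finally have "zz \<in> B" unfolding B_def using C_add[OF y(1) R_C[OF r(1)]] by blast
    then have "coset_of z1 B = coset_of z2 B" using coset_eq[OF B0 Bsub] zz_def by blast
    then show "c1 = c2" using z1 z2 by simp
  qed
  have img: "induced_map ?R ?dR ?r ` cohomology ?C ?d = cohomology ?R ?dR"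
  proof
    show "induced_map ?R ?dR ?r ` cohomology ?C ?d \<subseteq> cohomology ?R ?dR"
    proof
      fix x assume "x \<in> induced_map ?R ?dR ?r ` cohomology ?C ?d"
      then obtain z where z: "z \<in> ?C" "?d z = (\<lambda>_. 0)" "x = induced_map ?R ?dR ?r (coset_of z B)"
        using H1 by auto
      have x: "x = coset_of (?r z) BR" using z ind by simp
      have "?dR (?r z) = (\<lambda>_. 0)" using d_rho[OF z(1)] z(2) rho_idem by (simp add: R_d_def rho_def)
      then show "x \<in> cohomology ?R ?dR" unfolding H2 x using rho_R[OF z(1)] by blast
    qed
  next
    show "cohomology ?R ?dR \<subseteq> induced_map ?R ?dR ?r ` cohomology ?C ?d"
    proof
      fix x assume "x \<in> cohomology ?R ?dR"
      then obtain w where w: "w \<in> ?R" "?dR w = (\<lambda>_. 0)" "x = coset_of w BR" using H2 by auto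
      have wC: "w \<in> ?C" using R_C[OF w(1)] .
      have "?d w = (\<lambda>_. 0)" using dR_eq[OF w(1)] w(2) by simp
      then have "coset_of w B \<in> cohomology ?C ?d" unfolding H1 using wC by blast
      moreover have "induced_map ?R ?dR ?r (coset_of w B) = x" using ind[OF wC] rho_id[OF w(1)] w(3) by simp
      ultimately show "x \<in> induced_map ?R ?dR ?r ` cohomology ?C ?d" by blast
    qed
  qed
  show ?thesis unfolding induces_iso_in_cohomology_def bij_betw_def using part1 part2 inj img by blast
qed

end
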